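(* For all $n\ge 1$, $|F_n(321,14253)|=2^n-\binom{n}{2}-1$.
   Context: A permutation $\pi$ avoids a classical pattern $p\in S_k$ if no subsequence of $\pi$ of length $k$ is order-isomorphic to $p$. A Fishburn permutation is a permutation $\pi=\pi_1\cdots\pi_n$ of $[n]$ for which there are no indices $i<j$ with $\pi_j<\pi_i<\pi_{i+1}$ and $\pi_i=\pi_j+1$. $F_n(\sigma_1,\dots,\sigma_k)$ denotes the set of Fishburn permutations of length $n$ avoiding each of the classical patterns $\sigma_1,\dots,\sigma_k$. *)

theory Defs
  imports Main
begin

text \<open>Permutations of [n] are represented as lists of length n containing each of 1..n exactly once.
Positions are 0-based list indices.\<close>

definition perms :: "nat \<Rightarrow> nat list set" where
  "perms n = {\<pi>. distinct \<pi> \<and> set \<pi> = {1..n}}"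

definition contains :: "nat list \<Rightarrow> nat list \<Rightarrow> bool" where
  "contains \<pi> p = (\<exists>idx :: nat \<Rightarrow> nat.
      (\<forall>a b. a < b \<and> b < length p \<longrightarrow> idx a < idx b) \<and>
      (\<forall>a < length p. idx a < length \<pi>) \<and>
      (\<forall>a < length p. \<forall>b < length p. (\<pi> ! idx a < \<pi> ! idx b) \<longleftrightarrow> (p ! a < p ! b)))"

definition avoids :: "nat list \<Rightarrow> nat list \<Rightarrow> bool" where
  "avoids \<pi> p = (\<not> contains \<pi> p)"

definition fishburn :: "nat list \<Rightarrow> bool" where
  "fishburn \<pi> = (\<not> (\<exists>i j. i < j \<and> j < length \<pi> \<and> i + 1 < length \<pi> \<and>
      \<pi> ! j < \<pi> ! i \<and> \<pi> ! i < \<pi> ! (i + 1) \<and> \<pi> ! i = \<pi> ! j + 1))"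

definition F :: "nat \<Rightarrow> nat list list \<Rightarrow> nat list set" where
  "F n ps = {\<pi> \<in> perms n. fishburn \<pi> \<and> (\<forall>p \<in> set ps. avoids \<pi> p)}"

end

theory Submission
  imports Defs
begin


lemma c321: "contains \<pi> [3,2,1] \<longleftrightarrow> (\<exists>i j k. i<j \<and> j<k \<and> k<length \<pi> \<and> \<pi>!j < \<pi>!i \<and> \<pi>!k < \<pi>!j)"
proof
  assume "contains \<pi> [3,2,1]"
  then obtain idx where h1: "\<forall>a b. a < b \<and> b < length [3,2,1::nat] \<longrightarrow> idx a < idx b"
    and h2: "\<forall>a<length [3,2,1::nat]. idx a < length \<pi>"
    and h3: "\<forall>a<length [3,2,1::nat]. \<forall>b<length [3,2,1::nat]. (\<pi> ! idx a < \<pi> ! idx b) \<longleftrightarrow> ([3,2,1::nat] ! a < [3,2,1::nat] ! b)"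
    unfolding contains_def by blast
  have "idx 0 < idx 1" "idx 1 < idx 2" using h1 by auto
  moreover have "idx 2 < length \<pi>" using h2 by auto
  moreover have "\<pi>!idx 1 < \<pi>!idx 0" "\<pi>!idx 2 < \<pi>!idx 1" using h3[rule_format, of 1 0] h3[rule_format, of 2 1] by auto
  ultimately show "\<exists>i j k. i<j \<and> j<k \<and> k<length \<pi> \<and> \<pi>!j < \<pi>!i \<and> \<pi>!k < \<pi>!j" by blast
next
  assume "\<exists>i j k. i<j \<and> j<k \<and> k<length \<pi> \<and> \<pi>!j < \<pi>!i \<and> \<pi>!k < \<pi>!j"
  then obtain i j k where h: "i<j" "j<k" "k<length \<pi>" "\<pi>!j < \<pi>!i" "\<pi>!k < \<pi>!j" by blast
  show "contains \<pi> [3,2,1]" unfolding contains_def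
    apply (rule exI[of _ "\<lambda>a. [i,j,k] ! a"])
    using h by (auto simp: less_Suc_eq numeral_eq_Suc)
qed

lemma c14253: "contains \<pi> [1,4,2,5,3] \<longleftrightarrow> (\<exists>a b c d e. a<b \<and> b<c \<and> c<d \<and> d<e \<and> e<length \<pi> \<and>
   \<pi>!a < \<pi>!c \<and> \<pi>!c < \<pi>!e \<and> \<pi>!e < \<pi>!b \<and> \<pi>!b < \<pi>!d)"
proof
  assume "contains \<pi> [1,4,2,5,3]"
  then obtain idx where h1: "\<forall>a b. a < b \<and> b < length [1,4,2,5,3::nat] \<longrightarrow> idx a < idx b"
    and h2: "\<forall>a<length [1,4,2,5,3::nat]. idx a < length \<pi>"
    and h3: "\<forall>a<length [1,4,2,5,3::nat]. \<forall>b<length [1,4,2,5,3::nat]. (\<pi> ! idx a < \<pi> ! idx b) \<longleftrightarrow> ([1,4,2,5,3::nat] ! a < [1,4,2,5,3::nat] ! b)"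
    unfolding contains_def by blast
  have "idx 0 < idx 1" "idx 1 < idx 2" "idx 2 < idx 3" "idx 3 < idx 4" using h1 by auto
  moreover have "idx 4 < length \<pi>" using h2 by auto
  moreover have "\<pi>!idx 0 < \<pi>!idx 2" "\<pi>!idx 2 < \<pi>!idx 4" "\<pi>!idx 4 < \<pi>!idx 1" "\<pi>!idx 1 < \<pi>!idx 3"
    using h3[rule_format, of 0 2] h3[rule_format, of 2 4] h3[rule_format, of 4 1] h3[rule_format, of 1 3] by auto
  ultimately show "\<exists>a b c d e. a<b \<and> b<c \<and> c<d \<and> d<e \<and> e<length \<pi> \<and>
   \<pi>!a < \<pi>!c \<and> \<pi>!c < \<pi>!e \<and> \<pi>!e < \<pi>!b \<and> \<pi>!b < \<pi>!d" by blast
next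
  assume "\<exists>a b c d e. a<b \<and> b<c \<and> c<d \<and> d<e \<and> e<length \<pi> \<and>
   \<pi>!a < \<pi>!c \<and> \<pi>!c < \<pi>!e \<and> \<pi>!e < \<pi>!b \<and> \<pi>!b < \<pi>!d"
  then obtain a b c d e where h: "a<b" "b<c" "c<d" "d<e" "e<length \<pi>" "\<pi>!a < \<pi>!c" "\<pi>!c < \<pi>!e" "\<pi>!e < \<pi>!b" "\<pi>!b < \<pi>!d" by blast
  show "contains \<pi> [1,4,2,5,3]" unfolding contains_def
    apply (rule exI[of _ "\<lambda>x. [a,b,c,d,e] ! x"])
    using h by (auto simp: less_Suc_eq numeral_eq_Suc)
qed



lemma contains_mono_map:
  fixes f :: "nat \<Rightarrow> nat"
  assumes "\<forall>x\<in>set \<sigma>. \<forall>y\<in>set \<sigma>. x < y \<longrightarrow> f x < f y"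
  shows "contains (map f \<sigma>) p \<longleftrightarrow> contains \<sigma> p"
proof -
  have key: "\<And>i i'. i < length \<sigma> \<Longrightarrow> i' < length \<sigma> \<Longrightarrow> (f (\<sigma>!i) < f (\<sigma>!i')) \<longleftrightarrow> \<sigma>!i < \<sigma>!i'"
  proof -
    fix i i' assume "i < length \<sigma>" "i' < length \<sigma>"
    then have s: "\<sigma>!i \<in> set \<sigma>" "\<sigma>!i' \<in> set \<sigma>" by auto
    show "(f (\<sigma>!i) < f (\<sigma>!i')) \<longleftrightarrow> \<sigma>!i < \<sigma>!i'"
      using assms s by (metis less_asym' linorder_neqE_nat)
  qed
  show ?thesis unfolding contains_def
  proof (intro iffI; elim exE; rule_tac x=idx in exI)
    fix idx
    assume h: "(\<forall>a b. a < b \<and> b < length p \<longrightarrow> idx a < idx b) \<and>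
      (\<forall>a<length p. idx a < length (map f \<sigma>)) \<and>
      (\<forall>a<length p. \<forall>b<length p. (map f \<sigma> ! idx a < map f \<sigma> ! idx b) = (p ! a < p ! b))"
    then show "(\<forall>a b. a < b \<and> b < length p \<longrightarrow> idx a < idx b) \<and>
      (\<forall>a<length p. idx a < length \<sigma>) \<and>
      (\<forall>a<length p. \<forall>b<length p. (\<sigma> ! idx a < \<sigma> ! idx b) = (p ! a < p ! b))"
      using key by (auto simp: nth_map)
  next
    fix idx
    assume h: "(\<forall>a b. a < b \<and> b < length p \<longrightarrow> idx a < idx b) \<and>
      (\<forall>a<length p. idx a < length \<sigma>) \<and>
      (\<forall>a<length p. \<forall>b<length p. (\<sigma> ! idx a < \<sigma> ! idx b) = (p ! a < p ! b))"
    then show "(\<forall>a b. a < b \<and> b < length p \<longrightarrow> idx a < idx b) \<and>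
      (\<forall>a<length p. idx a < length (map f \<sigma>)) \<and>
      (\<forall>a<length p. \<forall>b<length p. (map f \<sigma> ! idx a < map f \<sigma> ! idx b) = (p ! a < p ! b))"
      using key by (auto simp: nth_map)
  qed
qed

lemma contains_append: "contains \<sigma> p \<Longrightarrow> contains (\<sigma> @ ys) p"
  unfolding contains_def
  apply (elim exE, rule_tac x=idx in exI)
  by (auto simp: nth_append)

lemma contains_snoc:
  assumes c: "contains (\<sigma> @ [x]) p"
    and a: "a1 < a2" "a2 < length p - 1" "p!(length p - 1) < p!a1" "p!(length p - 1) < p!a2"
    and no: "\<forall>i i'. i < i' \<and> i' < length \<sigma> \<longrightarrow> \<not>(x < \<sigma>!i \<and> x < \<sigma>!i')"
  shows "contains \<sigma> p"
proof -
  obtain idx where h1: "\<forall>a b. a < b \<and> b < length p \<longrightarrow> idx a < idx b"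
    and h2: "\<forall>a<length p. idx a < length (\<sigma>@[x])"
    and h3: "\<forall>a<length p. \<forall>b<length p. ((\<sigma>@[x]) ! idx a < (\<sigma>@[x]) ! idx b) \<longleftrightarrow> (p ! a < p ! b)"
    using c unfolding contains_def by blast
  define l where "l = length p - 1"
  have lp: "l < length p" "a1 < l" "a2 < l" using a l_def by auto
  show ?thesis
  proof (cases "idx l < length \<sigma>")
    case True
    have lt: "\<forall>a<length p. idx a < length \<sigma>"
    proof (intro allI impI)
      fix a assume "a < length p"
      then have "a < l \<or> a = l" using l_def by auto
      then show "idx a < length \<sigma>" using h1 True lp by (metis order.strict_trans)
    qed
    show ?thesis unfolding contains_def
      apply (rule exI[of _ idx])
      using h1 lt h3 by (auto simp: nth_append)
  next
    case False
    then have eq: "idx l = length \<sigma>" using h2 lp by auto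
    have i12: "idx a1 < idx a2" "idx a2 < length \<sigma>" using h1 lp eq a(1) by (metis order.strict_trans)+
    have "(\<sigma>@[x]) ! idx l < (\<sigma>@[x]) ! idx a1" "(\<sigma>@[x]) ! idx l < (\<sigma>@[x]) ! idx a2"
      using h3 lp a l_def by auto
    then have "x < \<sigma>!idx a1" "x < \<sigma>!idx a2" using eq i12 by (auto simp: nth_append)
    then show ?thesis using no i12 by blast
  qed
qed

lemma fish_snoc:
  "fishburn (\<sigma> @ [m]) \<longleftrightarrow> fishburn \<sigma> \<and> \<not>(\<exists>i. i+1 < length \<sigma> \<and> \<sigma>!i = m+1 \<and> m+1 < \<sigma>!(i+1))"
proof
  assume f: "fishburn (\<sigma> @ [m])"
  have "fishburn \<sigma>" unfolding fishburn_def
  proof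
    assume "\<exists>i j. i < j \<and> j < length \<sigma> \<and> i + 1 < length \<sigma> \<and> \<sigma> ! j < \<sigma> ! i \<and> \<sigma> ! i < \<sigma> ! (i + 1) \<and> \<sigma> ! i = \<sigma> ! j + 1"
    then obtain i j where "i < j \<and> j < length \<sigma> \<and> i + 1 < length \<sigma> \<and> \<sigma> ! j < \<sigma> ! i \<and> \<sigma> ! i < \<sigma> ! (i + 1) \<and> \<sigma> ! i = \<sigma> ! j + 1" by blast
    then show False using f unfolding fishburn_def
      apply (elim notE) apply (rule exI[of _ i], rule exI[of _ j]) by (auto simp: nth_append)
  qed
  moreover have "\<not>(\<exists>i. i+1 < length \<sigma> \<and> \<sigma>!i = m+1 \<and> m+1 < \<sigma>!(i+1))"
  proof
    assume "\<exists>i. i+1 < length \<sigma> \<and> \<sigma>!i = m+1 \<and> m+1 < \<sigma>!(i+1)"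
    then obtain i where "i+1 < length \<sigma> \<and> \<sigma>!i = m+1 \<and> m+1 < \<sigma>!(i+1)" by blast
    then show False using f unfolding fishburn_def
      apply (elim notE) apply (rule exI[of _ i], rule exI[of _ "length \<sigma>"]) by (auto simp: nth_append)
  qed
  ultimately show "fishburn \<sigma> \<and> \<not>(\<exists>i. i+1 < length \<sigma> \<and> \<sigma>!i = m+1 \<and> m+1 < \<sigma>!(i+1))" by blast
next
  assume h: "fishburn \<sigma> \<and> \<not>(\<exists>i. i+1 < length \<sigma> \<and> \<sigma>!i = m+1 \<and> m+1 < \<sigma>!(i+1))"
  show "fishburn (\<sigma> @ [m])" unfolding fishburn_def
  proof
    assume "\<exists>i j. i < j \<and> j < length (\<sigma>@[m]) \<and> i + 1 < length (\<sigma>@[m]) \<and> (\<sigma>@[m]) ! j < (\<sigma>@[m]) ! i \<and> (\<sigma>@[m]) ! i < (\<sigma>@[m]) ! (i + 1) \<and> (\<sigma>@[m]) ! i = (\<sigma>@[m]) ! j + 1"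
    then obtain i j where ij: "i < j" "j < length (\<sigma>@[m])" "i + 1 < length (\<sigma>@[m])" "(\<sigma>@[m]) ! j < (\<sigma>@[m]) ! i"
      "(\<sigma>@[m]) ! i < (\<sigma>@[m]) ! (i + 1)" "(\<sigma>@[m]) ! i = (\<sigma>@[m]) ! j + 1" by blast
    show False
    proof (cases "j < length \<sigma>")
      case True
      then have "i + 1 < length \<sigma> \<or> i + 1 = length \<sigma>" using ij by auto
      then show False
      proof
        assume "i + 1 < length \<sigma>"
        then show False using h ij True unfolding fishburn_def by (auto simp: nth_append)
      next
        assume "i + 1 = length \<sigma>"
        then show False using ij True by auto
      qed
    next
      case False
      then have j: "j = length \<sigma>" using ij by auto
      then have "i + 1 < length \<sigma> \<or> i + 1 = length \<sigma>" using ij by auto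
      then show False
      proof
        assume i1: "i + 1 < length \<sigma>"
        have "\<sigma>!i = m+1" "m+1 < \<sigma>!(i+1)" using ij j i1 by (auto simp: nth_append)
        then show False using h i1 by blast
      next
        assume i1: "i + 1 = length \<sigma>"
        then show False using ij j by (auto simp: nth_append)
      qed
    qed
  qed
qed



definition G :: "nat \<Rightarrow> nat list set" where
  "G n = {\<pi> \<in> perms n. fishburn \<pi> \<and> \<not>contains \<pi> [3,2,1] \<and> \<not>contains \<pi> [1,4,2,5,3]}"

lemma F_G: "F n [[3,2,1],[1,4,2,5,3]] = G n"
  by (auto simp: F_def G_def avoids_def)

lemma fish_map_top:
  assumes "set \<sigma> \<subseteq> {1..m}"
  shows "fishburn (map (\<lambda>x. if x = m then Suc m else x) \<sigma>) \<longleftrightarrow> fishburn \<sigma>"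
proof -
  let ?f = "\<lambda>x. if x = m then Suc m else x"
  have b: "\<And>i. i < length \<sigma> \<Longrightarrow> \<sigma>!i \<le> m" using assms nth_mem by fastforce
  show ?thesis
  unfolding fishburn_def length_map
  proof (intro iffI notI; elim exE conjE)
    fix i j
    assume n: "\<not> (\<exists>i j. i < j \<and> j < length \<sigma> \<and> i + 1 < length \<sigma> \<and> map ?f \<sigma> ! j < map ?f \<sigma> ! i \<and>
             map ?f \<sigma> ! i < map ?f \<sigma> ! (i + 1) \<and> map ?f \<sigma> ! i = map ?f \<sigma> ! j + 1)"
      and h: "i < j" "j < length \<sigma>" "i + 1 < length \<sigma>" "\<sigma> ! j < \<sigma> ! i" "\<sigma> ! i < \<sigma> ! (i + 1)" "\<sigma> ! i = \<sigma> ! j + 1"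
    have "\<sigma>!(i+1) \<le> m" using b h by auto
    then have e: "map ?f \<sigma> ! i = \<sigma>!i" "map ?f \<sigma> ! j = \<sigma>!j" "\<sigma>!(i+1) \<le> map ?f \<sigma> ! (i+1)"
      using h by auto
    have "i < j \<and> j < length \<sigma> \<and> i + 1 < length \<sigma> \<and> map ?f \<sigma> ! j < map ?f \<sigma> ! i \<and>
             map ?f \<sigma> ! i < map ?f \<sigma> ! (i + 1) \<and> map ?f \<sigma> ! i = map ?f \<sigma> ! j + 1"
      using e h by linarith
    then show False using n by blast
  next
    fix i j
    assume n: "\<not> (\<exists>i j. i < j \<and> j < length \<sigma> \<and> i + 1 < length \<sigma> \<and> \<sigma> ! j < \<sigma> ! i \<and> \<sigma> ! i < \<sigma> ! (i + 1) \<and> \<sigma> ! i = \<sigma> ! j + 1)"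
      and h: "i < j" "j < length \<sigma>" "i + 1 < length \<sigma>" "map ?f \<sigma> ! j < map ?f \<sigma> ! i"
        "map ?f \<sigma> ! i < map ?f \<sigma> ! (i + 1)" "map ?f \<sigma> ! i = map ?f \<sigma> ! j + 1"
    have bi: "\<sigma>!i \<le> m" "\<sigma>!j \<le> m" "\<sigma>!(i+1) \<le> m" using b h by auto
    have "\<sigma>!i \<noteq> m" using h bi by (auto split: if_splits)
    moreover have "\<sigma>!j \<noteq> m" using h bi by (auto split: if_splits)
    ultimately have "\<sigma> ! j < \<sigma> ! i \<and> \<sigma> ! i < \<sigma> ! (i + 1) \<and> \<sigma> ! i = \<sigma> ! j + 1"
      using h bi by (auto split: if_splits)
    then show False using n h by blast
  qed
qed

lemma G_snoc_max:
  assumes "\<sigma> \<in> perms m"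
  shows "\<sigma> @ [Suc m] \<in> G (Suc m) \<longleftrightarrow> \<sigma> \<in> G m"
proof -
  have s: "set \<sigma> = {1..m}" "distinct \<sigma>" using assms by (auto simp: perms_def)
  have p: "\<sigma> @ [Suc m] \<in> perms (Suc m)" using s by (auto simp: perms_def)
  have lt: "\<And>i. i < length \<sigma> \<Longrightarrow> \<sigma>!i < Suc m" using s nth_mem by fastforce
  have no: "\<forall>i i'. i < i' \<and> i' < length \<sigma> \<longrightarrow> \<not>(Suc m < \<sigma>!i \<and> Suc m < \<sigma>!i')"
  proof (intro allI impI)
    fix i i' assume "i < i' \<and> i' < length \<sigma>"
    then show "\<not>(Suc m < \<sigma>!i \<and> Suc m < \<sigma>!i')" using lt[of i'] by auto
  qed
  have c1: "contains (\<sigma> @ [Suc m]) [3,2,1] \<longleftrightarrow> contains \<sigma> [3,2,1]"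
    using contains_snoc[of \<sigma> "Suc m" "[3,2,1]" 0 1] no contains_append by auto
  have c2: "contains (\<sigma> @ [Suc m]) [1,4,2,5,3] \<longleftrightarrow> contains \<sigma> [1,4,2,5,3]"
    using contains_snoc[of \<sigma> "Suc m" "[1,4,2,5,3]" 1 3] no contains_append by auto
  have f: "fishburn (\<sigma> @ [Suc m]) \<longleftrightarrow> fishburn \<sigma>"
  proof -
    have "\<not>(\<exists>i. i+1 < length \<sigma> \<and> \<sigma>!i = Suc m+1 \<and> Suc m+1 < \<sigma>!(i+1))"
    proof
      assume "\<exists>i. i+1 < length \<sigma> \<and> \<sigma>!i = Suc m+1 \<and> Suc m+1 < \<sigma>!(i+1)"
      then obtain i where "i+1 < length \<sigma>" "\<sigma>!i = Suc m+1" by blast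
      then show False using lt[of i] by auto
    qed
    then show ?thesis using fish_snoc[of \<sigma> "Suc m"] by blast
  qed
  show ?thesis using p assms c1 c2 f by (auto simp: G_def)
qed

definition up :: "nat \<Rightarrow> nat \<Rightarrow> nat" where "up m x = (if x = m then Suc m else x)"
definition dn :: "nat \<Rightarrow> nat \<Rightarrow> nat" where "dn m x = (if x = Suc m then m else x)"

lemma G_snoc_sub:
  assumes "\<sigma> \<in> perms m" "m \<ge> 1"
  shows "map (up m) \<sigma> @ [m] \<in> G (Suc m) \<longleftrightarrow> \<sigma> \<in> G m"
proof -
  have s: "set \<sigma> = {1..m}" "distinct \<sigma>" using assms by (auto simp: perms_def)
  let ?t = "map (up m) \<sigma>"
  have mono: "\<forall>x\<in>set \<sigma>. \<forall>y\<in>set \<sigma>. x < y \<longrightarrow> up m x < up m y" using s by (auto simp: up_def)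
  have inj: "inj_on (up m) (set \<sigma>)" using s by (auto simp: up_def inj_on_def)
  have st: "set ?t = {1..<m} \<union> {Suc m}"
  proof -
    have "set ?t = up m ` {1..m}" using s by simp
    also have "\<dots> = {1..<m} \<union> {Suc m}"
    proof
      show "up m ` {1..m} \<subseteq> {1..<m} \<union> {Suc m}" by (auto simp: up_def)
      show "{1..<m} \<union> {Suc m} \<subseteq> up m ` {1..m}"
      proof
        fix x assume "x \<in> {1..<m} \<union> {Suc m}"
        then show "x \<in> up m ` {1..m}"
        proof
          assume "x \<in> {1..<m}" then show ?thesis by (intro rev_image_eqI[of x]) (auto simp: up_def)
        next
          assume "x \<in> {Suc m}" then show ?thesis using assms(2) by (intro rev_image_eqI[of m]) (auto simp: up_def)
        qed
      qed
    qed
    finally show ?thesis .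
  qed
  have dt: "distinct ?t" using s inj by (simp add: distinct_map)
  have p: "?t @ [m] \<in> perms (Suc m)" using st dt assms(2) by (auto simp: perms_def)
  have le: "\<And>i. i < length ?t \<Longrightarrow> ?t!i \<le> Suc m"
  proof -
    fix i assume "i < length ?t"
    then have "?t!i \<in> set ?t" by (rule nth_mem)
    then show "?t!i \<le> Suc m" unfolding st by auto
  qed
  have no: "\<forall>i i'. i < i' \<and> i' < length ?t \<longrightarrow> \<not>(m < ?t!i \<and> m < ?t!i')"
  proof (intro allI impI notI)
    fix i i' assume h: "i < i' \<and> i' < length ?t" "m < ?t!i \<and> m < ?t!i'"
    moreover have "i < length ?t" "i' < length ?t" using h by auto
    ultimately have "?t!i = Suc m" "?t!i' = Suc m" using le[of i] le[of i'] by auto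
    moreover have "i < length ?t" "i' < length ?t" using h by auto
    ultimately have "i = i'" using nth_eq_iff_index_eq[OF dt] by metis
    then show False using h by simp
  qed
  have c1: "contains (?t @ [m]) [3,2,1] \<longleftrightarrow> contains \<sigma> [3,2,1]"
  proof -
    have "contains (?t @ [m]) [3,2,1] \<longleftrightarrow> contains ?t [3,2,1]"
      using contains_snoc[of ?t m "[3,2,1]" 0 1] no contains_append by auto
    then show ?thesis using contains_mono_map[OF mono] by simp
  qed
  have c2: "contains (?t @ [m]) [1,4,2,5,3] \<longleftrightarrow> contains \<sigma> [1,4,2,5,3]"
  proof -
    have "contains (?t @ [m]) [1,4,2,5,3] \<longleftrightarrow> contains ?t [1,4,2,5,3]"
      using contains_snoc[of ?t m "[1,4,2,5,3]" 1 3] no contains_append by auto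
    then show ?thesis using contains_mono_map[OF mono] by simp
  qed
  have f1: "fishburn (?t @ [m]) \<longleftrightarrow> fishburn ?t"
  proof -
    have "\<not>(\<exists>i. i+1 < length ?t \<and> ?t!i = m+1 \<and> m+1 < ?t!(i+1))"
    proof
      assume "\<exists>i. i+1 < length ?t \<and> ?t!i = m+1 \<and> m+1 < ?t!(i+1)"
      then obtain i where "i+1 < length ?t" "m+1 < ?t!(i+1)" by blast
      then show False using le[of "i+1"] by auto
    qed
    then show ?thesis using fish_snoc[of ?t m] by blast
  qed
  have f2: "fishburn ?t \<longleftrightarrow> fishburn \<sigma>" using fish_map_top[of \<sigma> m] s unfolding up_def by auto
  show ?thesis using p assms c1 c2 f1 f2 by (auto simp: G_def)
qed

lemma dec_max:
  assumes "\<pi> \<in> perms (Suc m)" "last \<pi> = Suc m"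
  shows "\<exists>\<sigma>\<in>perms m. \<pi> = \<sigma> @ [Suc m]"
proof -
  have ne: "\<pi> \<noteq> []" using assms by (auto simp: perms_def)
  have e: "\<pi> = butlast \<pi> @ [Suc m]" using ne assms(2) by (metis append_butlast_last_id)
  have d: "distinct (butlast \<pi> @ [Suc m])" "set (butlast \<pi> @ [Suc m]) = {1..Suc m}"
    using assms(1) e unfolding perms_def by auto
  then have "distinct (butlast \<pi>)" "Suc m \<notin> set (butlast \<pi>)" by auto
  moreover have "set (butlast \<pi>) = {1..m}"
  proof -
    have "set (butlast \<pi>) = {1..Suc m} - {Suc m}" using d(2) calculation(2) by auto
    also have "\<dots> = {1..m}" by auto
    finally show ?thesis .
  qed
  ultimately have "butlast \<pi> \<in> perms m" unfolding perms_def by auto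
  then show ?thesis using e by blast
qed



definition L :: "nat \<Rightarrow> nat \<Rightarrow> nat \<Rightarrow> nat list" where
  "L n v j = Suc v # [1..<Suc j] @ [v+2..<Suc n] @ [Suc j..<v] @ [v]"

definition g :: "nat \<Rightarrow> nat \<Rightarrow> nat \<Rightarrow> nat \<Rightarrow> nat" where
  "g n v j i = (if i = 0 then Suc v else if i \<le> j then i else if i \<le> j + (n-v-1) then i + v + 1 - j
     else if i < n - 1 then i + v + 1 - n else v)"

definition ok :: "nat \<Rightarrow> nat \<Rightarrow> nat \<Rightarrow> bool" where
  "ok n v j \<longleftrightarrow> 2 \<le> v \<and> v + 2 \<le> n \<and> 1 \<le> j \<and> j < v"

declare upt_Suc[simp del]

lemma L_len: "ok n v j \<Longrightarrow> length (L n v j) = n"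
  by (auto simp: L_def ok_def)

lemma L_nth: assumes "ok n v j" "i < n" shows "L n v j ! i = g n v j i"
proof -
  have o: "2 \<le> v" "v + 2 \<le> n" "1 \<le> j" "j < v" using assms(1) by (auto simp: ok_def)
  consider "i = 0" | "0 < i \<and> i \<le> j" | "j < i \<and> i \<le> j + (n-v-1)" | "j + (n-v-1) < i \<and> i < n - 1" | "i = n - 1"
    using assms(2) by linarith
  then show ?thesis
  proof cases
    case 1 then show ?thesis by (simp add: L_def g_def)
  next
    case 2
    then have "L n v j ! i = ([1..<Suc j] @ [v+2..<Suc n] @ [Suc j..<v] @ [v]) ! (i - 1)"
      by (simp add: L_def nth_Cons')
    also have "\<dots> = [1..<Suc j] ! (i - 1)" using 2 by (simp add: nth_append) linarith
    also have "\<dots> = i" using 2 by (simp del: upt_Suc)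
    finally show ?thesis using 2 by (simp add: g_def)
  next
    case 3
    then have "L n v j ! i = ([1..<Suc j] @ [v+2..<Suc n] @ [Suc j..<v] @ [v]) ! (i - 1)"
      by (simp add: L_def nth_Cons')
    also have "\<dots> = ([v+2..<Suc n] @ [Suc j..<v] @ [v]) ! (i - 1 - j)"
      using 3 by (subst nth_append_right) auto
    also have "\<dots> = [v+2..<Suc n] ! (i - 1 - j)" using 3 o by (subst nth_append_left) auto
    also have "\<dots> = i + v + 1 - j" using 3 o by (subst nth_upt) auto
    finally show ?thesis using 3 by (simp add: g_def)
  next
    case 4
    then have "L n v j ! i = ([1..<Suc j] @ [v+2..<Suc n] @ [Suc j..<v] @ [v]) ! (i - 1)"
      by (simp add: L_def nth_Cons')
    also have "\<dots> = ([v+2..<Suc n] @ [Suc j..<v] @ [v]) ! (i - 1 - j)"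
      using 4 by (subst nth_append_right) auto
    also have "\<dots> = ([Suc j..<v] @ [v]) ! (i - 1 - j - (n - v - 1))" using 4 o by (subst nth_append_right) auto
    also have "\<dots> = [Suc j..<v] ! (i - 1 - j - (n - v - 1))" using 4 o by (subst nth_append_left) auto
    also have "\<dots> = i + v + 1 - n" using 4 o by (subst nth_upt) auto
    moreover have "g n v j i = i + v + 1 - n" using 4 o unfolding g_def by auto
    ultimately show ?thesis by simp
  next
    case 5
    then have "L n v j ! i = ([1..<Suc j] @ [v+2..<Suc n] @ [Suc j..<v] @ [v]) ! (i - 1)"
      using o by (simp add: L_def nth_Cons')
    also have "\<dots> = ([v+2..<Suc n] @ [Suc j..<v] @ [v]) ! (i - 1 - j)"
      using 5 o by (subst nth_append_right) auto
    also have "\<dots> = ([Suc j..<v] @ [v]) ! (i - 1 - j - (n - v - 1))" using 5 o by (subst nth_append_right) auto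
    also have "\<dots> = [v] ! (i - 1 - j - (n - v - 1) - (v - Suc j))" using 5 o by (subst nth_append_right) auto
    also have "\<dots> = v" using 5 o by simp
    moreover have "g n v j i = v" using 5 o unfolding g_def by auto
    ultimately show ?thesis by simp
  qed
qed



lemma L_perm: assumes "ok n v j" shows "L n v j \<in> perms n"
proof -
  have o: "2 \<le> v" "v + 2 \<le> n" "1 \<le> j" "j < v" using assms(1) by (auto simp: ok_def)
  have d: "distinct (L n v j)" using o by (auto simp: L_def)
  have s: "set (L n v j) = {1..n}"
  proof
    show "set (L n v j) \<subseteq> {1..n}" using o by (auto simp: L_def)
    show "{1..n} \<subseteq> set (L n v j)"
    proof
      fix x assume "x \<in> {1..n}"
      then have "x = Suc v \<or> x \<in> {1..<Suc j} \<or> x \<in> {v+2..<Suc n} \<or> x \<in> {Suc j..<v} \<or> x = v" using o by auto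
      then show "x \<in> set (L n v j)" unfolding L_def by auto
    qed
  qed
  show ?thesis using d s by (simp add: perms_def)
qed

lemma g_inv: assumes "ok n v j" "i < i'" "i' < n" "g n v j i' < g n v j i"
  shows "i = 0 \<or> (j < i \<and> i \<le> j + (n-v-1) \<and> j + (n-v-1) < i')"
  using assms unfolding ok_def g_def by (auto split: if_splits)


lemma L_G: assumes "ok n v j" shows "L n v j \<in> G n"
proof -
  have o: "2 \<le> v" "v + 2 \<le> n" "1 \<le> j" "j < v" using assms(1) by (auto simp: ok_def)
  have len: "length (L n v j) = n" using L_len[OF assms] .
  have nth: "\<And>i. i < n \<Longrightarrow> L n v j ! i = g n v j i" using L_nth[OF assms] .
  have inv: "\<And>i i'. i < i' \<Longrightarrow> i' < n \<Longrightarrow> g n v j i' < g n v j i \<Longrightarrow> i = 0 \<or> (j < i \<and> i \<le> j + (n-v-1) \<and> j + (n-v-1) < i')"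
    using g_inv[OF assms] by blast
  have c1: "\<not> contains (L n v j) [3,2,1]"
  proof
    assume "contains (L n v j) [3,2,1]"
    then obtain a b c where h0: "a < b" "b < c" "c < n" "L n v j ! b < L n v j ! a" "L n v j ! c < L n v j ! b"
      unfolding c321 len by blast
    then have h: "a < b" "b < c" "c < n" "g n v j b < g n v j a" "g n v j c < g n v j b"
      using nth[of a] nth[of b] nth[of c] by auto
    have 1: "j < b \<and> b \<le> j + (n-v-1) \<and> j + (n-v-1) < c" using inv[of b c] h by auto
    have "a = 0" using inv[of a b] h 1 by auto
    then show False using h 1 o unfolding g_def by (auto split: if_splits)
  qed
  have c2: "\<not> contains (L n v j) [1,4,2,5,3]"
  proof
    assume "contains (L n v j) [1,4,2,5,3]"
    then obtain a b c d e where h0: "a < b" "b < c" "c < d" "d < e" "e < n"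
      "L n v j ! c < L n v j ! b" "L n v j ! e < L n v j ! d"
      unfolding c14253 len by (meson order.strict_trans)
    then have h: "a < b" "b < c" "c < d" "d < e" "e < n"
      "g n v j c < g n v j b" "g n v j e < g n v j d"
      using nth[of b] nth[of c] nth[of d] nth[of e] by auto
    have 1: "j < b \<and> b \<le> j + (n-v-1) \<and> j + (n-v-1) < c" using inv[of b c] h by auto
    have 2: "j < d \<and> d \<le> j + (n-v-1)" using inv[of d e] h by auto
    show False using 1 2 h by auto
  qed
  have f: "fishburn (L n v j)"
    unfolding fishburn_def len
  proof
    assume "\<exists>i ja. i < ja \<and> ja < n \<and> i + 1 < n \<and> L n v j ! ja < L n v j ! i \<and> L n v j ! i < L n v j ! (i + 1) \<and> L n v j ! i = L n v j ! ja + 1"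
    then obtain i k where h0: "i < k" "k < n" "i + 1 < n" "L n v j ! k < L n v j ! i" "L n v j ! i < L n v j ! (i + 1)" "L n v j ! i = L n v j ! k + 1"
      by blast
    then have h: "i < k" "k < n" "i + 1 < n" "g n v j k < g n v j i" "g n v j i < g n v j (i+1)" "g n v j i = g n v j k + 1"
      using nth[of i] nth[of k] nth[of "i+1"] by auto
    have "i = 0 \<or> (j < i \<and> i \<le> j + (n-v-1) \<and> j + (n-v-1) < k)" using inv h by blast
    then show False
    proof
      assume "i = 0" then show False using h o unfolding g_def by auto
    next
      assume a: "j < i \<and> i \<le> j + (n-v-1) \<and> j + (n-v-1) < k"
      then have gi: "g n v j i = i + v + 1 - j" using o unfolding g_def by auto
      have "i + 1 \<le> j + (n-v-1)"
      proof (rule ccontr)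
        assume "\<not> i + 1 \<le> j + (n-v-1)"
        then have "g n v j (i+1) \<le> v" using a o h unfolding g_def by auto
        then show False using gi h a o by auto
      qed
      have "g n v j k \<le> v" using a h o unfolding g_def by auto
      then show False using gi h a o by auto
    qed
  qed
  show ?thesis using L_perm[OF assms] c1 c2 f by (simp add: G_def)
qed



lemma strict_upt: "sorted_wrt (<) (xs::nat list) \<Longrightarrow> set xs = {a..<b} \<Longrightarrow> xs = [a..<b]"
  using sorted_distinct_set_unique[of xs "[a..<b]"] strict_sorted_iff by auto

lemma filt_sorted:
  assumes "sorted_wrt (\<lambda>x y. P x \<longrightarrow> P y \<longrightarrow> x < y) (xs::nat list)"
  shows "sorted_wrt (<) (filter P xs)"
proof -
  have "sorted_wrt (\<lambda>x y. P x \<longrightarrow> P y \<longrightarrow> x < y) (filter P xs)" using sorted_wrt_filter[OF assms] .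
  then show ?thesis by (rule sorted_wrt_mono_rel[rotated]) auto
qed

lemma struct:
  fixes M :: "nat list"
  assumes d: "distinct M" and s: "set M = {1..n} - {v, Suc v}" and ne: "M \<noteq> []" and h0: "hd M = 1"
    and v: "2 \<le> v" "v + 2 \<le> n"
    and ss: "sorted_wrt (\<lambda>x y. x < v \<longrightarrow> y < v \<longrightarrow> x < y) M"
    and sb: "sorted_wrt (\<lambda>x y. v < x \<longrightarrow> v < y \<longrightarrow> x < y) M"
    and cg: "\<And>a b c. a < b \<Longrightarrow> b < c \<Longrightarrow> c < length M \<Longrightarrow> v < M!a \<Longrightarrow> M!b < v \<Longrightarrow> v < M!c \<Longrightarrow> False"
  shows "\<exists>j. 1 \<le> j \<and> j < v \<and> M = [1..<Suc j] @ [v+2..<Suc n] @ [Suc j..<v]"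
proof -
  define A where "A = takeWhile (\<lambda>x. x < v) M"
  define R where "R = dropWhile (\<lambda>x. x < v) M"
  define B where "B = takeWhile (\<lambda>x. v < x) R"
  define C where "C = dropWhile (\<lambda>x. v < x) R"
  have MR: "M = A @ R" unfolding A_def R_def by simp
  have RB: "R = B @ C" unfolding B_def C_def by simp
  have M: "M = A @ B @ C" using MR RB by simp
  have vM: "v \<notin> set M" using s by auto
  have sA: "\<forall>x\<in>set A. x < v" unfolding A_def by (auto dest: set_takeWhileD)
  have sB: "\<forall>x\<in>set B. v < x" unfolding B_def by (auto dest: set_takeWhileD)
  have sC: "\<forall>x\<in>set C. x < v"
  proof
    fix y assume yC: "y \<in> set C"
    show "y < v"
    proof (rule ccontr)
      assume "\<not> y < v"
      moreover have "y \<noteq> v" using yC vM M by auto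
      ultimately have vy: "v < y" by auto
      have Cne: "C \<noteq> []" using yC by auto
      have "\<not> v < hd C" using hd_dropWhile[of "\<lambda>x. v < x" R] Cne unfolding C_def by auto
      moreover have "hd C \<noteq> v" using vM M Cne by (metis Un_iff hd_in_set set_append)
      ultimately have hc: "hd C < v" by auto
      obtain c C' where Cc: "C = c # C'" using Cne by (cases C) auto
      have cv: "c < v" using hc Cc by simp
      have yC': "y \<in> set C'" using yC Cc vy cv by auto
      have Rne: "R \<noteq> []" using RB Cne by auto
      have "\<not> hd R < v" using hd_dropWhile[of "\<lambda>x. x < v" M] Rne unfolding R_def by auto
      moreover have "hd R \<noteq> v" using vM MR Rne by (metis Un_iff hd_in_set set_append)
      ultimately have "v < hd R" by auto
      then have Bne: "B \<noteq> []" unfolding B_def using Rne by (cases R) auto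
      obtain b B' where Bb: "B = b # B'" using Bne by (cases B) auto
      have bv: "v < b" using sB Bb by auto
      obtain k where k: "k < length C'" "C' ! k = y" using yC' by (auto simp: in_set_conv_nth)
      define ia where "ia = length A"
      define ib where "ib = length A + length B"
      define ic where "ic = length A + length B + 1 + k"
      have Ma: "M ! ia = b" unfolding ia_def M Bb by simp
      have Mb: "M ! ib = c" unfolding ib_def M Cc by (simp add: nth_append)
      have Mc: "M ! ic = y" unfolding ic_def M Cc using k by (simp add: nth_append)
      have "ia < ib" "ib < ic" "ic < length M" unfolding ia_def ib_def ic_def M Bb Cc using k by auto
      then show False using cg[of ia ib ic] Ma Mb Mc bv cv vy by auto
    qed
  qed
  have fs: "filter (\<lambda>x. x < v) M = A @ C"
    unfolding M using sA sB sC by (auto simp: filter_empty_conv)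
  have fb: "filter (\<lambda>x. v < x) M = B"
  proof -
    have "filter (\<lambda>x. v < x) A = []" "filter (\<lambda>x. v < x) C = []" using sA sC by (auto simp: filter_empty_conv)
    moreover have "filter (\<lambda>x. v < x) B = B" using sB by auto
    ultimately show ?thesis unfolding M by simp
  qed
  have AC: "A @ C = [1..<v]"
  proof -
    have "sorted_wrt (<) (filter (\<lambda>x. x < v) M)" using filt_sorted[of "\<lambda>x. x < v" M] ss by simp
    moreover have "set (filter (\<lambda>x. x < v) M) = {1..<v}"
    proof -
      have "set (filter (\<lambda>x. x < v) M) = {x \<in> {1..n} - {v, Suc v}. x < v}" using s by auto
      also have "\<dots> = {1..<v}" using v by auto
      finally show ?thesis .
    qed
    ultimately show ?thesis using fs strict_upt by metis
  qed
  have Bv: "B = [v+2..<Suc n]"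
  proof -
    have "sorted_wrt (<) (filter (\<lambda>x. v < x) M)" using filt_sorted[of "\<lambda>x. v < x" M] sb by simp
    moreover have "set (filter (\<lambda>x. v < x) M) = {v+2..<Suc n}"
    proof -
      have "set (filter (\<lambda>x. v < x) M) = {x \<in> {1..n} - {v, Suc v}. v < x}" using s by auto
      also have "\<dots> = {v+2..<Suc n}" using v by auto
      finally show ?thesis .
    qed
    ultimately show ?thesis using fb strict_upt by metis
  qed
  define j where "j = length A"
  have Ane: "A \<noteq> []" unfolding A_def using ne h0 v by (cases M) auto
  have j1: "1 \<le> j" using Ane j_def by (cases A) auto
  have jv: "j < v"
  proof -
    have "length (A @ C) = v - 1" using AC by simp
    then show ?thesis unfolding j_def using v by auto
  qed
  have "A = take j [1..<v]" unfolding j_def using AC by (metis append_eq_conv_conj)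
  then have Aj: "A = [1..<Suc j]" using jv by simp
  have "C = drop j [1..<v]" unfolding j_def using AC by (metis append_eq_conv_conj)
  then have Cj: "C = [Suc j..<v]" by simp
  show ?thesis using j1 jv M Aj Cj Bv by blast
qed



lemma classify:
  assumes G: "\<pi> \<in> G n" and lst: "last \<pi> + 2 \<le> n"
  shows "\<exists>v j. ok n v j \<and> \<pi> = L n v j"
proof -
  have pm: "distinct \<pi>" "set \<pi> = {1..n}" using G by (auto simp: G_def perms_def)
  have len: "length \<pi> = n" using distinct_card[OF pm(1)] pm(2) by simp
  have fish: "fishburn \<pi>" and n321: "\<not> contains \<pi> [3,2,1]" and n5: "\<not> contains \<pi> [1,4,2,5,3]"
    using G by (auto simp: G_def)
  define p where "p = (\<lambda>i. \<pi> ! i)"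
  have rng: "\<And>i. i < n \<Longrightarrow> 1 \<le> p i \<and> p i \<le> n"
  proof -
    fix i assume "i < n" then have "p i \<in> set \<pi>" unfolding p_def using len by simp
    then show "1 \<le> p i \<and> p i \<le> n" using pm by auto
  qed
  have sur: "\<And>x. 1 \<le> x \<Longrightarrow> x \<le> n \<Longrightarrow> \<exists>i<n. p i = x"
  proof -
    fix x assume "1 \<le> x" "x \<le> n" then have "x \<in> set \<pi>" using pm by auto
    then show "\<exists>i<n. p i = x" unfolding p_def using len by (auto simp: in_set_conv_nth)
  qed
  have inj: "\<And>i i'. i < n \<Longrightarrow> i' < n \<Longrightarrow> p i = p i' \<Longrightarrow> i = i'"
    unfolding p_def using nth_eq_iff_index_eq[OF pm(1)] len by metis
  have injne: "\<And>i i'. i < n \<Longrightarrow> i' < n \<Longrightarrow> i \<noteq> i' \<Longrightarrow> p i \<noteq> p i'"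
    using inj by blast
  have no3: "\<And>a b c. a < b \<Longrightarrow> b < c \<Longrightarrow> c < n \<Longrightarrow> p b < p a \<Longrightarrow> p c < p b \<Longrightarrow> False"
    using n321 unfolding c321 len p_def by blast
  have no5: "\<And>a b c d e. a < b \<Longrightarrow> b < c \<Longrightarrow> c < d \<Longrightarrow> d < e \<Longrightarrow> e < n \<Longrightarrow>
     p a < p c \<Longrightarrow> p c < p e \<Longrightarrow> p e < p b \<Longrightarrow> p b < p d \<Longrightarrow> False"
    using n5 unfolding c14253 len p_def by blast
  have nf: "\<And>i k. i < k \<Longrightarrow> k < n \<Longrightarrow> i + 1 < n \<Longrightarrow> p k < p i \<Longrightarrow> p i < p (i+1) \<Longrightarrow> p i = p k + 1 \<Longrightarrow> False"
    using fish unfolding fishburn_def len p_def by blast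
  have ne: "\<pi> \<noteq> []" using lst len by auto
  define v where "v = last \<pi>"
  have n1: "n \<ge> 1" using ne len by (cases \<pi>) auto
  have pv: "p (n-1) = v" unfolding p_def v_def using ne len by (simp add: last_conv_nth)
  have v1: "1 \<le> v" using rng[of "n-1"] pv n1 by auto
  have vn: "v + 2 \<le> n" using lst v_def by simp
  have n3: "n \<ge> 3" using v1 vn by auto
  obtain m where nm: "n = Suc m" using n1 by (cases n) auto
  note nm[simp]
  have S1: "\<And>i i'. i < i' \<Longrightarrow> i' < n - 1 \<Longrightarrow> v < p i \<Longrightarrow> v < p i' \<Longrightarrow> p i < p i'"
  proof -
    fix i i' assume h: "i < i'" "i' < n - 1" "v < p i" "v < p i'"
    show "p i < p i'"
    proof (rule ccontr)
      assume "\<not> p i < p i'"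
      moreover have "p i \<noteq> p i'"
      proof
        assume "p i = p i'"
        moreover have "i < n" "i' < n" using h by auto
        ultimately have "i = i'" using inj by blast
        then show False using h by simp
      qed
      ultimately have "p i' < p i" by auto
      then show False using no3[of i i' "n-1"] h pv n1 by auto
    qed
  qed
  obtain i0 where i0: "i0 < n" "p i0 = Suc v" using sur[of "Suc v"] vn by auto
  have i0n: "i0 < n - 1"
  proof -
    have "i0 \<noteq> n - 1" using i0(2) pv by auto
    then show ?thesis using i0(1) by linarith
  qed
  have aft: "\<And>i. i < n - 1 \<Longrightarrow> v < p i \<Longrightarrow> i0 \<le> i"
  proof (rule ccontr)
    fix i assume h: "i < n - 1" "v < p i" "\<not> i0 \<le> i"
    then have "p i < p i0" using S1[of i i0] i0n i0 by auto
    then show False using h i0 by auto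
  qed
  obtain i2 where i2: "i2 < n" "p i2 = v + 2" using sur[of "v+2"] vn by auto
  have i2n: "i2 < n - 1"
  proof -
    have "i2 \<noteq> n - 1" using i2(2) pv by auto
    then show ?thesis using i2(1) by linarith
  qed
  have i02: "i0 < i2"
  proof -
    have "i0 \<le> i2" using aft[of i2] i2n i2(2) by simp
    moreover have "i0 \<noteq> i2" using i0(2) i2(2) by auto
    ultimately show ?thesis by simp
  qed
  have "\<not> p i0 < p (i0+1)"
  proof
    assume a: "p i0 < p (i0+1)"
    have b: "i0 < n - 1" "n - 1 < n" "i0 + 1 < n" "p (n-1) < p i0" "p i0 = p (n-1) + 1"
      using i0n n1 i0(2) pv by auto
    show False using nf[OF b(1) b(2) b(3) b(4) a b(5)] .
  qed
  moreover have "p (i0 + 1) \<noteq> p i0" by (rule injne) (use i0n in linarith)+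
  ultimately have u1: "p (i0+1) < Suc v" using i0 by auto
  have i01: "i0 + 1 < i2" using i02 i2 u1 by (cases "i0 + 1 = i2") auto
  have "p (i0+1) \<noteq> p (n-1)" by (rule injne) (use i01 i2n in linarith)+
  then have "p (i0+1) \<noteq> v" using pv by simp
  then have u: "p (i0+1) < v" using u1 by auto
  have i00: "i0 = 0"
  proof (rule ccontr)
    assume i0p: "i0 \<noteq> 0"
    have p0v: "p 0 < v"
    proof -
      have "p 0 \<noteq> p (n-1)" by (rule injne) (use n3 in linarith)+
      then have "p 0 \<noteq> v" using pv by simp
      moreover have "\<not> v < p 0" using aft[of 0] i0p n3 by auto
      ultimately show ?thesis by auto
    qed
    have "p 0 \<noteq> p (i0+1)" by (rule injne) (use i0n in linarith)+
    moreover have "\<not> p 0 < p (i0+1)"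
      using no5[of 0 i0 "i0+1" i2 "n-1"] i0p i01 i2n u i0 i2 pv by auto
    ultimately have up: "p (i0+1) < p 0" by auto
    have p01: "p 0 < p 1"
    proof (cases "i0 = 1")
      case True then show ?thesis using i0 p0v by auto
    next
      case False
      then have i1: "1 < i0" using i0p by auto
      have "p 1 \<noteq> p (n-1)" by (rule injne) (use i1 i0n in linarith)+
      then have "p 1 \<noteq> v" using pv by simp
      moreover have "\<not> v < p 1" using aft[of 1] i1 i0n by auto
      ultimately have p1v: "p 1 < v" by auto
      show ?thesis
      proof (rule ccontr)
        assume "\<not> p 0 < p 1"
        moreover have "p 0 \<noteq> p 1" by (rule injne) (use i0n i1 in linarith)+
        ultimately have p10: "p 1 < p 0" by auto
        have "p 1 \<noteq> p (i0+1)" by (rule injne) (use i0n i1 in linarith)+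
        then have "p (i0+1) < p 1 \<or> p 1 < p (i0+1)" by auto
        then show False
        proof
          assume "p (i0+1) < p 1"
          then show False using no3[of 0 1 "i0+1"] p10 i1 i0n by auto
        next
          assume "p 1 < p (i0+1)"
          then show False using no5[of 1 i0 "i0+1" i2 "n-1"] i1 i01 i2n u i0 i2 pv by auto
        qed
      qed
    qed
    have "1 \<le> p (i0+1)" using rng[of "i0+1"] i0n by auto
    then have p02: "2 \<le> p 0" using up by auto
    have r0: "p 0 \<le> n" using rng[of 0] by simp
    have "\<exists>i<n. p i = p 0 - 1" by (rule sur) (use p02 r0 in linarith)+
    then obtain q where q: "q < n" "p q = p 0 - 1" by blast
    have q0: "0 < q" using q p02 by (cases q) auto
    have b: "0 + 1 < n" "p q < p 0" "p 0 < p (0+1)" "p 0 = p q + 1" using q p02 p01 n3 by auto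
    show False using nf[OF q0 q(1) b] .
  qed
  have p0: "p 0 = Suc v" using i0 i00 by simp
  have p1v: "p 1 < v" using u i00 by simp
  obtain q1 where q1: "q1 < n" "p q1 = 1" using sur[of 1] n3 by auto
  have p11: "p 1 = 1"
  proof (rule ccontr)
    assume a: "p 1 \<noteq> 1"
    have "q1 \<noteq> 0" using q1 p0 v1 by (cases q1) auto
    moreover have "q1 \<noteq> 1" using q1 a by auto
    ultimately have "1 < q1" by auto
    moreover have "1 < p 1" using a rng[of 1] n3 by auto
    ultimately show False using no3[of 0 1 q1] q1 p0 p1v by auto
  qed
  have v2: "2 \<le> v" using p1v p11 by auto
  have S6: "\<And>i i'. 0 < i \<Longrightarrow> i < i' \<Longrightarrow> i' < n \<Longrightarrow> p i < v \<Longrightarrow> p i' < v \<Longrightarrow> p i < p i'"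
  proof -
    fix i i' assume h: "0 < i" "i < i'" "i' < n" "p i < v" "p i' < v"
    show "p i < p i'"
    proof (rule ccontr)
      assume "\<not> p i < p i'"
      moreover have "p i \<noteq> p i'" by (rule injne) (use h in linarith)+
      ultimately have "p i' < p i" by auto
      then show False using no3[of 0 i i'] h p0 by auto
    qed
  qed
  have S7: "\<And>a b c. 1 < a \<Longrightarrow> a < b \<Longrightarrow> b < c \<Longrightarrow> c < n - 1 \<Longrightarrow> v < p a \<Longrightarrow> p b < v \<Longrightarrow> v < p c \<Longrightarrow> False"
  proof -
    fix a b c assume h: "1 < a" "a < b" "b < c" "c < n - 1" "v < p a" "p b < v" "v < p c"
    have "p b \<noteq> p 1" by (rule injne) (use h in linarith)+
    then have "p b \<noteq> 1" using p11 by simp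
    then have "1 < p b" using rng[of b] h by auto
    moreover have "p a < p c" using S1[of a c] h by auto
    ultimately show False using no5[of 1 a b c "n-1"] h p11 pv by auto
  qed
  define M where "M = butlast (tl \<pi>)"
  have lM: "length M = n - 2" unfolding M_def using len by simp
  have Mn: "\<And>k. k < n - 2 \<Longrightarrow> M ! k = p (Suc k)"
    unfolding M_def p_def using len by (simp add: nth_butlast nth_tl)
  have \<pi>eq: "\<pi> = Suc v # M @ [v]"
  proof -
    have tne: "tl \<pi> \<noteq> []" using len n3 by (cases \<pi>) auto
    have "\<pi> = hd \<pi> # tl \<pi>" using ne by simp
    moreover have "hd \<pi> = Suc v" using p0 ne unfolding p_def by (simp add: hd_conv_nth)
    moreover have "tl \<pi> = butlast (tl \<pi>) @ [last (tl \<pi>)]" using tne by simp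
    moreover have "last (tl \<pi>) = v" using tne ne unfolding v_def by (cases \<pi>) auto
    ultimately show ?thesis unfolding M_def by metis
  qed
  have dd: "distinct (Suc v # M @ [v])" using pm(1) \<pi>eq by metis
  have dM: "distinct M" "v \<notin> set M" "Suc v \<notin> set M" using dd by auto
  have sM: "set M = {1..n} - {v, Suc v}"
  proof -
    have "set \<pi> = {Suc v} \<union> set M \<union> {v}" using \<pi>eq by auto
    then show ?thesis using pm(2) dM by auto
  qed
  have Mne: "M \<noteq> []" using lM n3 v2 vn by auto
  have hM: "hd M = 1" using Mn[of 0] p11 Mne lM n3 by (simp add: hd_conv_nth)
  have ss: "sorted_wrt (\<lambda>x y. x < v \<longrightarrow> y < v \<longrightarrow> x < y) M"
    unfolding sorted_wrt_iff_nth_less lM using S6 Mn by auto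
  have sb: "sorted_wrt (\<lambda>x y. v < x \<longrightarrow> v < y \<longrightarrow> x < y) M"
    unfolding sorted_wrt_iff_nth_less lM using S1 Mn by auto
  have cg: "\<And>a b c. a < b \<Longrightarrow> b < c \<Longrightarrow> c < length M \<Longrightarrow> v < M!a \<Longrightarrow> M!b < v \<Longrightarrow> v < M!c \<Longrightarrow> False"
  proof -
    fix a b c assume h: "a < b" "b < c" "c < length M" "v < M!a" "M!b < v" "v < M!c"
    have "M ! 0 = 1" using Mn[of 0] p11 n3 by simp
    then have "a \<noteq> 0" using h v2 by (cases a) auto
    moreover have "M!a = p (Suc a)" "M!b = p (Suc b)" "M!c = p (Suc c)" using Mn h lM by auto
    ultimately have b: "1 < Suc a" "Suc a < Suc b" "Suc b < Suc c" "Suc c < n - 1" "v < p (Suc a)" "p (Suc b) < v" "v < p (Suc c)"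
      using h lM by auto
    show False using S7[OF b] .
  qed
  obtain j where j: "1 \<le> j" "j < v" "M = [1..<Suc j] @ [v+2..<Suc n] @ [Suc j..<v]"
  proof -
    have "\<exists>j. 1 \<le> j \<and> j < v \<and> M = [1..<Suc j] @ [v+2..<Suc n] @ [Suc j..<v]"
      apply (rule struct[OF dM(1) sM Mne hM v2 vn ss sb])
      using cg by blast
    then show ?thesis using that by blast
  qed
  have "ok n v j" using j v2 vn by (simp add: ok_def)
  moreover have "\<pi> = L n v j" using \<pi>eq j by (simp add: L_def)
  ultimately show ?thesis by blast
qed



lemma dec_sub:
  assumes "\<pi> \<in> perms (Suc m)" "last \<pi> = m" "m \<ge> 1"
  shows "\<exists>\<sigma>\<in>perms m. \<pi> = map (up m) \<sigma> @ [m]"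
proof -
  have ne: "\<pi> \<noteq> []" using assms by (auto simp: perms_def)
  have e: "\<pi> = butlast \<pi> @ [m]" using ne assms(2) by (metis append_butlast_last_id)
  have d: "distinct (butlast \<pi> @ [m])" "set (butlast \<pi> @ [m]) = {1..Suc m}"
    using assms(1) e unfolding perms_def by auto
  then have db: "distinct (butlast \<pi>)" "m \<notin> set (butlast \<pi>)" by auto
  have sb: "set (butlast \<pi>) = {1..Suc m} - {m}"
    using d(2) db(2) by auto
  define \<sigma> where "\<sigma> = map (dn m) (butlast \<pi>)"
  have inj: "inj_on (dn m) (set (butlast \<pi>))" using db(2) by (auto simp: dn_def inj_on_def)
  have "distinct \<sigma>" unfolding \<sigma>_def using db(1) inj by (simp add: distinct_map)
  moreover have "set \<sigma> = {1..m}"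
  proof -
    have "set \<sigma> = dn m ` ({1..Suc m} - {m})" unfolding \<sigma>_def using sb by simp
    also have "\<dots> = {1..m}"
    proof
      show "dn m ` ({1..Suc m} - {m}) \<subseteq> {1..m}" using assms(3) by (auto simp: dn_def)
      show "{1..m} \<subseteq> dn m ` ({1..Suc m} - {m})"
      proof
        fix x assume x: "x \<in> {1..m}"
        show "x \<in> dn m ` ({1..Suc m} - {m})"
        proof (cases "x = m")
          case True then show ?thesis by (intro rev_image_eqI[of "Suc m"]) (auto simp: dn_def)
        next
          case False then show ?thesis using x by (intro rev_image_eqI[of x]) (auto simp: dn_def)
        qed
      qed
    qed
    finally show ?thesis .
  qed
  ultimately have "\<sigma> \<in> perms m" by (simp add: perms_def)
  moreover have "map (up m) \<sigma> = butlast \<pi>"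
  proof -
    have "\<forall>x\<in>set (butlast \<pi>). up m (dn m x) = x" using db(2) by (auto simp: up_def dn_def)
    then show ?thesis unfolding \<sigma>_def by (simp add: map_idI)
  qed
  ultimately show ?thesis using e by metis
qed

lemma perms_finite: "finite (perms n)"
proof -
  have "perms n \<subseteq> {xs. set xs \<subseteq> {1..n} \<and> length xs = n}"
    unfolding perms_def using distinct_card by fastforce
  moreover have "finite {xs. set xs \<subseteq> {1..n} \<and> length xs = n}"
    by (rule finite_lists_length_eq) simp
  ultimately show ?thesis by (rule finite_subset)
qed

lemma G_finite: "finite (G n)"
  using perms_finite[of n] by (rule finite_subset[rotated]) (auto simp: G_def)

lemma L_last: "ok n v j \<Longrightarrow> last (L n v j) = v" by (simp add: L_def)

lemma L_inj: assumes "ok n v j" "ok n v' j'" "L n v j = L n v' j'" shows "v = v' \<and> j = j'"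
proof -
  have vv: "v = v'" using L_last[OF assms(1)] L_last[OF assms(2)] assms(3) by simp
  have key: "\<And>j j'. ok n v j \<Longrightarrow> ok n v j' \<Longrightarrow> j < j' \<Longrightarrow> L n v j \<noteq> L n v j'"
  proof
    fix j j' assume o: "ok n v j" "ok n v j'" "j < j'" and eq: "L n v j = L n v j'"
    have "Suc j < n" using o by (auto simp: ok_def)
    then have "g n v j (Suc j) = g n v j' (Suc j)" using L_nth[OF o(1)] L_nth[OF o(2)] eq by metis
    moreover have "g n v j (Suc j) = v + 2" using o(1) by (auto simp: ok_def g_def)
    moreover have "g n v j' (Suc j) = Suc j" using o by (auto simp: ok_def g_def)
    ultimately show False using o by (auto simp: ok_def)
  qed
  have "j = j'"
  proof (rule ccontr)
    assume "j \<noteq> j'"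
    then have "j < j' \<or> j' < j" by auto
    then show False using key assms vv by metis
  qed
  then show ?thesis using vv by simp
qed

definition Q :: "nat \<Rightarrow> (nat \<times> nat) set" where
  "Q n = {(v,j). ok n v j}"

lemma Q_card: "card (Q (Suc (Suc k))) = k choose 2"
proof -
  define R where "R k = {(v,j). 2 \<le> v \<and> v \<le> k \<and> 1 \<le> j \<and> j < (v::nat)}" for k
  have QR: "Q (Suc (Suc k)) = R k" unfolding Q_def R_def ok_def by auto
  have fin: "\<And>k. finite (R k)"
  proof -
    fix k show "finite (R k)" by (rule finite_subset[of _ "{0..k} \<times> {0..k}"]) (auto simp: R_def)
  qed
  have "card (R k) = k choose 2"
  proof (induction k)
    case 0
    have "R 0 = {}" unfolding R_def by auto
    then show ?case by simp
  next
    case (Suc k)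
    have e: "R (Suc k) = R k \<union> (\<lambda>j. (Suc k, j)) ` {1..<Suc k}"
    proof
      show "R (Suc k) \<subseteq> R k \<union> (\<lambda>j. (Suc k, j)) ` {1..<Suc k}" unfolding R_def by (auto simp: le_Suc_eq)
      show "R k \<union> (\<lambda>j. (Suc k, j)) ` {1..<Suc k} \<subseteq> R (Suc k)"
      proof
        fix x assume "x \<in> R k \<union> (\<lambda>j. (Suc k, j)) ` {1..<Suc k}"
        then show "x \<in> R (Suc k)"
        proof
          assume "x \<in> R k" then show ?thesis unfolding R_def by auto
        next
          assume "x \<in> (\<lambda>j. (Suc k, j)) ` {1..<Suc k}"
          then obtain j where "x = (Suc k, j)" "1 \<le> j" "j < Suc k" by auto
          then show ?thesis unfolding R_def by auto
        qed
      qed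
    qed
    have dj: "R k \<inter> (\<lambda>j. (Suc k, j)) ` {1..<Suc k} = {}" unfolding R_def by auto
    have "card (R (Suc k)) = card (R k) + card ((\<lambda>j. (Suc k, j)) ` {1..<Suc k})"
      unfolding e using fin dj by (intro card_Un_disjoint) auto
    also have "card ((\<lambda>j. (Suc k, j)) ` {1..<Suc k}) = k"
      by (subst card_image) (auto simp: inj_on_def)
    finally show ?case using Suc.IH by (simp add: numeral_2_eq_2)
  qed
  then show ?thesis using QR by simp
qed



lemma G_split:
  fixes k :: nat
  defines "m \<equiv> Suc k" and "n \<equiv> Suc (Suc k)"
  shows "G n = ((\<lambda>\<sigma>. \<sigma> @ [n]) ` G m \<union> (\<lambda>\<sigma>. map (up m) \<sigma> @ [m]) ` G m) \<union> (\<lambda>(v,j). L n v j) ` Q n"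
proof
  show "G n \<subseteq> ((\<lambda>\<sigma>. \<sigma> @ [n]) ` G m \<union> (\<lambda>\<sigma>. map (up m) \<sigma> @ [m]) ` G m) \<union> (\<lambda>(v,j). L n v j) ` Q n"
  proof
    fix \<pi> assume pG: "\<pi> \<in> G n"
    then have pp: "\<pi> \<in> perms n" by (simp add: G_def)
    then have "\<pi> \<noteq> []" "set \<pi> = {1..n}" unfolding perms_def n_def by auto
    then have "last \<pi> \<in> {1..n}" by (metis last_in_set)
    then have "last \<pi> = n \<or> last \<pi> = m \<or> last \<pi> + 2 \<le> n" unfolding m_def n_def by auto
    then show "\<pi> \<in> ((\<lambda>\<sigma>. \<sigma> @ [n]) ` G m \<union> (\<lambda>\<sigma>. map (up m) \<sigma> @ [m]) ` G m) \<union> (\<lambda>(v,j). L n v j) ` Q n"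
    proof (elim disjE)
      assume l: "last \<pi> = n"
      obtain \<sigma> where s: "\<sigma> \<in> perms m" "\<pi> = \<sigma> @ [Suc m]" using dec_max[of \<pi> m] pp l unfolding n_def m_def by auto
      then have "\<sigma> \<in> G m" using G_snoc_max[OF s(1)] pG unfolding n_def m_def by simp
      then show ?thesis using s unfolding n_def m_def by auto
    next
      assume l: "last \<pi> = m"
      obtain \<sigma> where s: "\<sigma> \<in> perms m" "\<pi> = map (up m) \<sigma> @ [m]" using dec_sub[of \<pi> m] pp l unfolding n_def m_def by auto
      then have "\<sigma> \<in> G m" using G_snoc_sub[OF s(1)] pG unfolding n_def m_def by simp
      then show ?thesis using s by auto
    next
      assume l: "last \<pi> + 2 \<le> n"
      obtain v j where "ok n v j" "\<pi> = L n v j" using classify[OF pG l] by blast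
      then show ?thesis unfolding Q_def by auto
    qed
  qed
  show "((\<lambda>\<sigma>. \<sigma> @ [n]) ` G m \<union> (\<lambda>\<sigma>. map (up m) \<sigma> @ [m]) ` G m) \<union> (\<lambda>(v,j). L n v j) ` Q n \<subseteq> G n"
  proof (intro Un_least image_subsetI)
    fix \<sigma> assume "\<sigma> \<in> G m"
    then show "\<sigma> @ [n] \<in> G n" using G_snoc_max[of \<sigma> m] unfolding n_def m_def by (auto simp: G_def)
  next
    fix \<sigma> assume "\<sigma> \<in> G m"
    then show "map (up m) \<sigma> @ [m] \<in> G n" using G_snoc_sub[of \<sigma> m] unfolding n_def m_def by (auto simp: G_def)
  next
    fix x assume "x \<in> Q n"
    then show "(\<lambda>(v,j). L n v j) x \<in> G n" using L_G unfolding Q_def by auto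
  qed
qed

lemma G_rec: "card (G (Suc (Suc k))) = 2 * card (G (Suc k)) + (k choose 2)"
proof -
  define m where "m = Suc k"
  define n where "n = Suc (Suc k)"
  let ?A = "(\<lambda>\<sigma>. \<sigma> @ [n]) ` G m"
  let ?B = "(\<lambda>\<sigma>. map (up m) \<sigma> @ [m]) ` G m"
  let ?C = "(\<lambda>(v,j). L n v j) ` Q n"
  have e: "G n = (?A \<union> ?B) \<union> ?C" unfolding n_def m_def by (rule G_split)
  have fQ: "finite (Q n)"
    by (rule finite_subset[of _ "{0..n} \<times> {0..n}"]) (auto simp: Q_def ok_def)
  have lA: "\<forall>x\<in>?A. last x = n" by auto
  have lB: "\<forall>x\<in>?B. last x = m" by auto
  have lC: "\<forall>x\<in>?C. last x + 2 \<le> n" using L_last unfolding Q_def ok_def by auto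
  have d1: "?A \<inter> ?B = {}"
  proof -
    { fix x assume "x \<in> ?A" "x \<in> ?B"
      then have "last x = n" "last x = m" using lA lB by auto
      then have False unfolding n_def m_def by simp }
    then show ?thesis by blast
  qed
  have d2: "(?A \<union> ?B) \<inter> ?C = {}"
  proof -
    { fix x assume "x \<in> ?A \<union> ?B" "x \<in> ?C"
      then have "last x = n \<or> last x = m" "last x + 2 \<le> n" using lA lB lC by auto
      then have False unfolding n_def m_def by auto }
    then show ?thesis by blast
  qed
  have cA: "card ?A = card (G m)" by (rule card_image) (auto simp: inj_on_def)
  have cB: "card ?B = card (G m)"
  proof (rule card_image, rule inj_onI)
    fix x y assume x: "x \<in> G m" and y: "y \<in> G m" and eq: "map (up m) x @ [m] = map (up m) y @ [m]"
    have "map (up m) x = map (up m) y" using eq by simp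
    then have "map (dn m) (map (up m) x) = map (dn m) (map (up m) y)" by simp
    moreover have "\<And>z. z \<in> G m \<Longrightarrow> map (dn m) (map (up m) z) = z"
    proof -
      fix z assume "z \<in> G m"
      then have "set z = {1..m}" by (simp add: G_def perms_def)
      then have "\<forall>w\<in>set z. dn m (up m w) = w" by (auto simp: up_def dn_def)
      then show "map (dn m) (map (up m) z) = z" by (simp add: map_idI)
    qed
    ultimately show "x = y" using x y by metis
  qed
  have cC: "card ?C = card (Q n)"
  proof (rule card_image, rule inj_onI)
    fix x y assume "x \<in> Q n" "y \<in> Q n" "(\<lambda>(v,j). L n v j) x = (\<lambda>(v,j). L n v j) y"
    then show "x = y" unfolding Q_def using L_inj by (cases x, cases y) auto
  qed
  have "card (G n) = card (?A \<union> ?B) + card ?C"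
    unfolding e using d2 G_finite fQ by (intro card_Un_disjoint) auto
  also have "card (?A \<union> ?B) = card ?A + card ?B"
    using d1 G_finite by (intro card_Un_disjoint) auto
  finally have "card (G n) = 2 * card (G m) + card (Q n)" using cA cB cC by simp
  then show ?thesis using Q_card[of k] unfolding n_def m_def by simp
qed

lemma G0: "[] \<in> G 0"
proof -
  have "\<not> contains [] [3,2,1]" unfolding c321 by simp
  moreover have "\<not> contains [] [1,4,2,5,3]" unfolding c14253 by simp
  moreover have "fishburn []" by (simp add: fishburn_def)
  moreover have "[] \<in> perms 0" by (simp add: perms_def)
  ultimately show "[] \<in> G 0" unfolding G_def by blast
qed

lemma G1a: "[1] \<in> G 1"
proof -
  have p0: "[] \<in> perms 0" by (simp add: perms_def)
  have "[] @ [Suc 0] \<in> G (Suc 0)" using G_snoc_max[OF p0] G0 by blast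
  then show ?thesis by simp
qed

lemma G1b: "G 1 \<subseteq> {[1]}"
proof
  fix \<pi> assume a: "\<pi> \<in> G 1"
  then have pp: "\<pi> \<in> perms (Suc 0)" by (simp add: G_def)
  then have s: "set \<pi> = {1}" unfolding perms_def by simp
  have ne: "\<pi> \<noteq> []"
  proof
    assume "\<pi> = []" then show False using s by simp
  qed
  have "last \<pi> \<in> set \<pi>" using ne by (rule last_in_set)
  then have "last \<pi> = Suc 0" using s by simp
  then obtain \<sigma> where "\<sigma> \<in> perms 0" "\<pi> = \<sigma> @ [Suc 0]" using dec_max[OF pp] by blast
  moreover have "\<sigma> \<in> perms 0 \<Longrightarrow> \<sigma> = []" for \<sigma> by (simp add: perms_def)
  ultimately show "\<pi> \<in> {[1]}" by simp
qed

lemma G1: "card (G 1) = 1"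
proof -
  have "G 1 = {[1]}" using G1a G1b by blast
  then show ?thesis by simp
qed

theorem mainTheorem16:
  fixes n :: nat
  assumes "n \<ge> 1"
  shows "int (card (F n [[3,2,1], [1,4,2,5,3]])) = 2 ^ n - int (n choose 2) - 1"
proof -
  have "int (card (G (Suc k))) = 2 ^ (Suc k) - int (Suc k choose 2) - 1" for k
  proof (induction k)
    case 0
    then show ?case using G1 by simp
  next
    case (Suc k)
    have r: "int (card (G (Suc (Suc k)))) = 2 * int (card (G (Suc k))) + int (k choose 2)"
      using G_rec[of k] by simp
    have b1: "Suc (Suc k) choose 2 = (Suc k choose 2) + Suc k"
      using binomial_Suc_Suc[of "Suc k" 1] by (simp add: numeral_2_eq_2)
    have b2: "Suc k choose 2 = (k choose 2) + k"
      using binomial_Suc_Suc[of k 1] by (simp add: numeral_2_eq_2)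
    show ?case using r Suc.IH b1 b2 by simp
  qed
  moreover obtain k where "n = Suc k" using assms by (cases n) auto
  ultimately show ?thesis using F_G by simp
qed

end
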